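(* Let $p\ge 5$ and let $g_{j,k}\in\{1,-1\}$ for $j=1,2$ and $1\le k\le p-4$. Put $\beta_j=\sigma_1^{g_{j,1}}\sigma_2^{g_{j,2}}\cdots\sigma_{p-5}^{g_{j,p-5}}$ for $j=1,2$. Then \[\beta_1\sigma_{p-4}^{g_{1,p-4}}\sigma_{p-3}\sigma_{p-2}\sigma_{p-1}^{-1}\,\beta_2\sigma_{p-4}^{g_{2,p-4}}\sigma_{p-3}\sigma_{p-2}^{-1}\sigma_{p-1}^{-1}\ \sim_M\ \beta_1\beta_2.\]
   Context: $\sigma_1,\sigma_2,\dots$ denote the standard Artin generators of the braid groups. Two braids (possibly with different numbers of strands) are Markov equivalent, written $\sim_M$, if their closures are isotopic links. *)

theory Defs
  imports Main
begin

text \<open>Braid words: a letter (i, True) is sigma_i, (i, False) is sigma_i^{-1}.\<close>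
type_synonym bword = "(nat \<times> bool) list"

definition valid_word :: "nat \<Rightarrow> bword \<Rightarrow> bool" where
  "valid_word n w \<longleftrightarrow> (\<forall>(i, b) \<in> set w. 1 \<le> i \<and> i < n)"

definition sig :: "nat \<Rightarrow> int \<Rightarrow> bword" where
  "sig i e = (if 0 \<le> e then replicate (nat e) (i, True) else replicate (nat (- e)) (i, False))"

inductive braid_eq :: "nat \<Rightarrow> bword \<Rightarrow> bword \<Rightarrow> bool" for n where
  refl: "braid_eq n w w"
| sym: "braid_eq n w w' \<Longrightarrow> braid_eq n w' w"
| trans: "braid_eq n u v \<Longrightarrow> braid_eq n v w \<Longrightarrow> braid_eq n u w"
| free: "1 \<le> i \<Longrightarrow> i < n \<Longrightarrow> braid_eq n (u @ [(i, b), (i, \<not> b)] @ v) (u @ v)"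
| rel_adj: "1 \<le> i \<Longrightarrow> i + 1 < n \<Longrightarrow>
    braid_eq n (u @ [(i, True), (i + 1, True), (i, True)] @ v)
               (u @ [(i + 1, True), (i, True), (i + 1, True)] @ v)"
| rel_far: "1 \<le> i \<Longrightarrow> i + 1 < j \<Longrightarrow> j < n \<Longrightarrow>
    braid_eq n (u @ [(i, True), (j, True)] @ v) (u @ [(j, True), (i, True)] @ v)"

text \<open>Markov equivalence of braids (n strands, word), generated by equality in B_n,
  conjugation and (positive/negative) stabilization. By Markov's theorem this is
  exactly isotopy of the closures.\<close>
inductive markov_eq :: "nat \<times> bword \<Rightarrow> nat \<times> bword \<Rightarrow> bool" (infix "\<sim>\<^sub>M" 50) where
  braid: "1 \<le> n \<Longrightarrow> valid_word n w \<Longrightarrow> valid_word n w' \<Longrightarrow> braid_eq n w w' \<Longrightarrow> (n, w) \<sim>\<^sub>M (n, w')"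
| conj: "1 \<le> n \<Longrightarrow> valid_word n u \<Longrightarrow> valid_word n w \<Longrightarrow> (n, u @ w) \<sim>\<^sub>M (n, w @ u)"
| stab: "1 \<le> n \<Longrightarrow> valid_word n w \<Longrightarrow> (n, w) \<sim>\<^sub>M (Suc n, w @ [(n, b)])"
| sym: "x \<sim>\<^sub>M y \<Longrightarrow> y \<sim>\<^sub>M x"
| trans: "x \<sim>\<^sub>M y \<Longrightarrow> y \<sim>\<^sub>M z \<Longrightarrow> x \<sim>\<^sub>M z"

end

theory Submission
  imports Defs
begin

lemma vw_append[simp]: "valid_word n (u @ v) = (valid_word n u \<and> valid_word n v)"
  unfolding valid_word_def by auto

lemma vw_Cons[simp]: "valid_word n (x # v) = (1 \<le> fst x \<and> fst x < n \<and> valid_word n v)"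
  unfolding valid_word_def by (cases x) auto

lemma vw_Nil[simp]: "valid_word n []"
  unfolding valid_word_def by auto

lemma be_valid: "braid_eq n w w' \<Longrightarrow> valid_word n w = valid_word n w'"
  by (induction rule: braid_eq.induct) auto

declare braid_eq.trans[trans]

lemma ctx: "braid_eq n w w' \<Longrightarrow> braid_eq n (u @ w @ v) (u @ w' @ v)"
proof (induction rule: braid_eq.induct)
  case (refl w) then show ?case by (rule braid_eq.refl)
next
  case (sym w w') show ?case by (rule braid_eq.sym[OF sym.IH])
next
  case (trans x y z) show ?case by (rule braid_eq.trans[OF trans.IH])
next
  case (free i u' b v')
  then show ?case using braid_eq.free[of i n "u @ u'" b "v' @ v"] by simp
next
  case (rel_adj i u' v')
  then show ?case using braid_eq.rel_adj[of i n "u @ u'" "v' @ v"] by simp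
next
  case (rel_far i j u' v')
  then show ?case using braid_eq.rel_far[of i j n "u @ u'" "v' @ v"] by simp
qed

definition invw :: "bword \<Rightarrow> bword" where
  "invw w = rev (map (\<lambda>(i, b). (i, \<not> b)) w)"

lemma invw_simps[simp]: "invw [] = []" "invw (x # w) = invw w @ [(fst x, \<not> snd x)]"
  "invw (u @ w) = invw w @ invw u"
  unfolding invw_def by (auto simp: case_prod_beta)

lemma valid_invw[simp]: "valid_word n (invw w) = valid_word n w"
  by (induction w) auto

lemma cancel1: "valid_word n w \<Longrightarrow> braid_eq n (w @ invw w) []"
proof (induction w)
  case Nil then show ?case by (simp add: braid_eq.refl)
next
  case (Cons x w)
  obtain i b where x: "x = (i, b)" by (cases x)
  have v: "valid_word n w" using Cons.prems by simp
  have "braid_eq n ([x] @ (w @ invw w) @ [(i, \<not> b)]) ([x] @ [] @ [(i, \<not> b)])"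
    by (rule ctx[OF Cons.IH[OF v]])
  also have "braid_eq n ([x] @ [] @ [(i, \<not> b)]) ([] @ [(i, b), (i, \<not> b)] @ [])"
    using x by (simp add: braid_eq.refl)
  also have "braid_eq n ([] @ [(i, b), (i, \<not> b)] @ []) ([] @ [])"
    using Cons.prems x by (intro braid_eq.free) auto
  finally show ?case using x by simp
qed

lemma invinv[simp]: "invw (invw w) = w"
  by (induction w) auto

lemma cancel2: "valid_word n w \<Longrightarrow> braid_eq n (invw w @ w) []"
  using cancel1[of n "invw w"] by simp

lemma inv_eq:
  assumes "valid_word n w" "valid_word n w'" "braid_eq n w w'"
  shows "braid_eq n (invw w) (invw w')"
proof -
  have "braid_eq n (invw w @ [] @ []) (invw w @ (w' @ invw w') @ [])"
    using ctx[OF braid_eq.sym[OF cancel1[OF assms(2)]]] by blast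
  also have "braid_eq n (invw w @ (w' @ invw w') @ []) ([] @ (invw w @ w) @ invw w')"
    using ctx[OF braid_eq.sym[OF assms(3)], of "invw w" "invw w'"] by simp
  also have "braid_eq n ([] @ (invw w @ w) @ invw w') ([] @ [] @ invw w')"
    using ctx[OF cancel2[OF assms(1)]] by blast
  finally show ?thesis by simp
qed

lemma comm_inv:
  assumes "valid_word n x" "braid_eq n (x @ y) (y @ x)"
  shows "braid_eq n (invw x @ y) (y @ invw x)"
proof -
  have "braid_eq n ((invw x @ y) @ [] @ []) ((invw x @ y) @ (x @ invw x) @ [])"
    using ctx[OF braid_eq.sym[OF cancel1[OF assms(1)]]] by blast
  also have "braid_eq n ((invw x @ y) @ (x @ invw x) @ []) (invw x @ (x @ y) @ invw x)"
    using ctx[OF braid_eq.sym[OF assms(2)], of "invw x" "invw x"] by simp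
  also have "braid_eq n (invw x @ (x @ y) @ invw x) ([] @ (invw x @ x) @ (y @ invw x))"
    by (simp add: braid_eq.refl)
  also have "braid_eq n ([] @ (invw x @ x) @ (y @ invw x)) ([] @ [] @ (y @ invw x))"
    using ctx[OF cancel2[OF assms(1)]] by blast
  finally show ?thesis by simp
qed

lemma far:
  assumes "1 \<le> i" "i + 1 < j" "j < n"
  shows "braid_eq n [(i, b), (j, c)] [(j, c), (i, b)]"
proof -
  have pp: "braid_eq n [(i, True), (j, True)] [(j, True), (i, True)]"
    using braid_eq.rel_far[OF assms, of "[]" "[]"] by simp
  have vi: "valid_word n [(i, True)]" "valid_word n [(j, True)]" using assms by auto
  have ft: "braid_eq n [(i, False), (j, True)] [(j, True), (i, False)]"
    using comm_inv[OF vi(1), of "[(j,True)]"] pp by simp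
  have tf: "braid_eq n [(i, True), (j, False)] [(j, False), (i, True)]"
    using comm_inv[OF vi(2), of "[(i,True)]"] braid_eq.sym[OF pp] by (simp add: braid_eq.sym)
  have ff: "braid_eq n [(i, False), (j, False)] [(j, False), (i, False)]"
    using inv_eq[OF _ _ braid_eq.sym[OF pp]] assms by simp
  show ?thesis
    by (cases b; cases c) (use pp ft tf ff in auto)
qed

lemma commute:
  assumes "\<And>i b. (i, b) \<in> set w \<Longrightarrow> 1 \<le> i \<and> i + 1 < j" "j < n"
  shows "braid_eq n ([(j, c)] @ w) (w @ [(j, c)])"
  using assms(1)
proof (induction w)
  case Nil then show ?case by (simp add: braid_eq.refl)
next
  case (Cons x w)
  obtain i b where x: "x = (i, b)" by (cases x)
  have h: "1 \<le> i" "i + 1 < j" using Cons.prems x by auto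
  have "braid_eq n ([] @ [(j, c), (i, b)] @ w) ([] @ [(i, b), (j, c)] @ w)"
    using ctx[OF braid_eq.sym[OF far[OF h assms(2)]]] by blast
  also have "braid_eq n ([] @ [(i, b), (j, c)] @ w) ([(i, b)] @ ([(j,c)] @ w) @ [])"
    by (simp add: braid_eq.refl)
  also have "braid_eq n ([(i, b)] @ ([(j,c)] @ w) @ []) ([(i, b)] @ (w @ [(j,c)]) @ [])"
    using ctx[OF Cons.IH] Cons.prems by (metis list.set_intros(2))
  finally show ?case using x by simp
qed

lemma adj: "1 \<le> i \<Longrightarrow> i + 1 < n \<Longrightarrow>
  braid_eq n [(i, True), (i + 1, True), (i, True)] [(i + 1, True), (i, True), (i + 1, True)]"
  using braid_eq.rel_adj[of i n "[]" "[]"] by simp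

lemma relEDE: "1 \<le> i \<Longrightarrow> i + 1 < n \<Longrightarrow>
  braid_eq n [(i + 1, False), (i, False), (i + 1, False)] [(i, False), (i + 1, False), (i, False)]"
  using inv_eq[OF _ _ adj, of n i] by (simp add: braid_eq.sym)

lemma rel2: assumes "1 \<le> i" "i + 1 < n"
  shows "braid_eq n [(i + 1, True), (i, True), (i + 1, False)] [(i, False), (i + 1, True), (i, True)]"
proof -
  have "braid_eq n ([] @ [] @ [(i + 1, True), (i, True), (i + 1, False)])
     ([] @ ([(i, False)] @ [(i, True)]) @ [(i + 1, True), (i, True), (i + 1, False)])"
    using braid_eq.sym[OF braid_eq.free[of i n "[]" False "[(i + 1, True), (i, True), (i + 1, False)]"]] assms by simp
  also have "braid_eq n ([] @ ([(i, False)] @ [(i, True)]) @ [(i + 1, True), (i, True), (i + 1, False)])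
     ([(i, False)] @ [(i, True), (i + 1, True), (i, True)] @ [(i + 1, False)])" by (simp add: braid_eq.refl)
  also have "braid_eq n ([(i, False)] @ [(i, True), (i + 1, True), (i, True)] @ [(i + 1, False)])
     ([(i, False)] @ [(i + 1, True), (i, True), (i + 1, True)] @ [(i + 1, False)])"
    using ctx[OF adj[OF assms]] by blast
  also have "braid_eq n ([(i, False)] @ [(i + 1, True), (i, True), (i + 1, True)] @ [(i + 1, False)])
     ([(i, False),(i + 1, True), (i, True)] @ [(i + 1, True), (i + 1, \<not>True)] @ [])" by (simp add: braid_eq.refl)
  also have "braid_eq n ([(i, False),(i + 1, True), (i, True)] @ [(i + 1, True), (i + 1, \<not>True)] @ [])
     ([(i, False),(i + 1, True), (i, True)] @ [])" by (rule braid_eq.free) (use assms in auto)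
  finally show ?thesis by simp
qed

lemma rel3: assumes "1 \<le> i" "i + 1 < n"
  shows "braid_eq n [(i + 1, False), (i, True), (i + 1, True)] [(i, True), (i + 1, True), (i, False)]"
proof -
  have "braid_eq n ([(i + 1, False), (i, True), (i + 1, True)] @ [] @ [])
     ([(i + 1, False), (i, True), (i + 1, True)] @ ([(i, True)] @ invw [(i, True)]) @ [])"
    using braid_eq.sym[OF braid_eq.free[of i n "[(i + 1, False), (i, True), (i + 1, True)]" True "[]"]] assms by simp
  also have "braid_eq n ([(i + 1, False), (i, True), (i + 1, True)] @ ([(i, True)] @ invw [(i, True)]) @ [])
     ([(i + 1, False)] @ [(i, True), (i + 1, True), (i, True)] @ [(i, False)])" by (simp add: braid_eq.refl)
  also have "braid_eq n ([(i + 1, False)] @ [(i, True), (i + 1, True), (i, True)] @ [(i, False)])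
     ([(i + 1, False)] @ [(i + 1, True), (i, True), (i + 1, True)] @ [(i, False)])"
    using ctx[OF adj[OF assms]] by blast
  also have "braid_eq n ([(i + 1, False)] @ [(i + 1, True), (i, True), (i + 1, True)] @ [(i, False)])
     ([] @ [(i + 1, False), (i + 1, \<not>False)] @ [(i, True), (i + 1, True), (i, False)])"
    by (simp add: braid_eq.refl)
  also have "braid_eq n ([] @ [(i + 1, False), (i + 1, \<not>False)] @ [(i, True), (i + 1, True), (i, False)])
     ([] @ [(i, True), (i + 1, True), (i, False)])" by (rule braid_eq.free) (use assms in auto)
  finally show ?thesis by simp
qed

lemma rel4: assumes "1 \<le> i" "i + 1 < n"
  shows "braid_eq n [(i + 1, False), (i, False), (i + 1, True)] [(i, True), (i + 1, False), (i, False)]"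
  using inv_eq[OF _ _ rel3[OF assms]] assms by simp

lemma Mb: "1 \<le> n \<Longrightarrow> valid_word n w \<Longrightarrow> braid_eq n w w' \<Longrightarrow> (n, w) \<sim>\<^sub>M (n, w')"
  using markov_eq.braid be_valid by blast

lemma Mc: "1 \<le> n \<Longrightarrow> valid_word n (u @ w) \<Longrightarrow> x = u @ w \<Longrightarrow> y = w @ u \<Longrightarrow> (n, x) \<sim>\<^sub>M (n, y)"
  using markov_eq.conj by simp

lemma Md: "1 \<le> n \<Longrightarrow> valid_word n w \<Longrightarrow> m = Suc n \<Longrightarrow> x = w @ [(n, b)] \<Longrightarrow> (m, x) \<sim>\<^sub>M (n, w)"
  using markov_eq.stab markov_eq.sym by blast

declare markov_eq.trans[trans]

lemma mainlem:
  fixes a :: nat and B1 B2 :: bword and s1 s2 :: bool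
  assumes a1: "1 \<le> a"
    and L1: "\<And>i b. (i, b) \<in> set B1 \<Longrightarrow> 1 \<le> i \<and> i < a"
    and L2: "\<And>i b. (i, b) \<in> set B2 \<Longrightarrow> 1 \<le> i \<and> i < a"
  shows "(a + 4, B1 @ [(a, s1), (a + 1, True), (a + 2, True), (a + 3, False)]
            @ B2 @ [(a, s2), (a + 1, True), (a + 2, False), (a + 3, False)]) \<sim>\<^sub>M (a, B1 @ B2)"
proof -
  have V1: "\<And>n. a \<le> n \<Longrightarrow> valid_word n B1" using L1 unfolding valid_word_def by fastforce
  have V2: "\<And>n. a \<le> n \<Longrightarrow> valid_word n B2" using L2 unfolding valid_word_def by fastforce
  note V = V1 V2
  have b1: "braid_eq (a + 4) ([(a + 3, False)] @ (B2 @ [(a, s2), (a + 1, True)]))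
      ((B2 @ [(a, s2), (a + 1, True)]) @ [(a + 3, False)])"
    by (rule commute) (use a1 in \<open>auto dest: L2\<close>)
  have b2: "braid_eq (a + 4) [(a + 3, False), (a + 2, False), (a + 3, False)]
      [(a + 2, False), (a + 3, False), (a + 2, False)]"
    using relEDE[of "a + 2" "a + 4"] a1 by (simp add: numeral_eq_Suc)
  have "(a + 4, B1 @ [(a, s1), (a + 1, True), (a + 2, True), (a + 3, False)]
            @ B2 @ [(a, s2), (a + 1, True), (a + 2, False), (a + 3, False)])
     \<sim>\<^sub>M (a + 4, B1 @ [(a, s1), (a + 1, True), (a + 2, True)] @ B2 @ [(a, s2), (a + 1, True),
          (a + 2, False), (a + 3, False), (a + 2, False)])"
  proof (rule Mb)
    show "valid_word (a + 4) (B1 @ [(a, s1), (a + 1, True), (a + 2, True), (a + 3, False)]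
            @ B2 @ [(a, s2), (a + 1, True), (a + 2, False), (a + 3, False)])" using a1 V by simp
    have "braid_eq (a + 4) ((B1 @ [(a, s1), (a + 1, True), (a + 2, True)]) @ ([(a + 3, False)] @ (B2 @ [(a, s2), (a + 1, True)])) @ [(a + 2, False), (a + 3, False)])
       ((B1 @ [(a, s1), (a + 1, True), (a + 2, True)]) @ ((B2 @ [(a, s2), (a + 1, True)]) @ [(a + 3, False)]) @ [(a + 2, False), (a + 3, False)])"
      by (rule ctx[OF b1])
    also have "braid_eq (a + 4) ((B1 @ [(a, s1), (a + 1, True), (a + 2, True)]) @ ((B2 @ [(a, s2), (a + 1, True)]) @ [(a + 3, False)]) @ [(a + 2, False), (a + 3, False)])
       ((B1 @ [(a, s1), (a + 1, True), (a + 2, True)] @ B2 @ [(a, s2), (a + 1, True)]) @ [(a + 3, False), (a + 2, False), (a + 3, False)] @ [])"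
      by (simp add: braid_eq.refl)
    also have "braid_eq (a + 4) ((B1 @ [(a, s1), (a + 1, True), (a + 2, True)] @ B2 @ [(a, s2), (a + 1, True)]) @ [(a + 3, False), (a + 2, False), (a + 3, False)] @ [])
       ((B1 @ [(a, s1), (a + 1, True), (a + 2, True)] @ B2 @ [(a, s2), (a + 1, True)]) @ [(a + 2, False), (a + 3, False), (a + 2, False)] @ [])"
      by (rule ctx[OF b2])
    finally show "braid_eq (a + 4) (B1 @ [(a, s1), (a + 1, True), (a + 2, True), (a + 3, False)]
            @ B2 @ [(a, s2), (a + 1, True), (a + 2, False), (a + 3, False)])
       (B1 @ [(a, s1), (a + 1, True), (a + 2, True)] @ B2 @ [(a, s2), (a + 1, True),
          (a + 2, False), (a + 3, False), (a + 2, False)])" by simp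
  qed simp
  also have "\<dots> \<sim>\<^sub>M (a + 4, (a + 2, False) # B1 @ [(a, s1), (a + 1, True), (a + 2, True)] @ B2 @ [(a, s2), (a + 1, True),
          (a + 2, False), (a + 3, False)])"
    by (rule Mc[where u = "B1 @ [(a, s1), (a + 1, True), (a + 2, True)] @ B2 @ [(a, s2), (a + 1, True),
          (a + 2, False), (a + 3, False)]" and w = "[(a + 2, False)]"]) (use a1 V in simp_all)
  also have "\<dots> \<sim>\<^sub>M (a + 3, (a + 2, False) # B1 @ [(a, s1), (a + 1, True), (a + 2, True)] @ B2 @ [(a, s2), (a + 1, True),
          (a + 2, False)])"
    by (rule Md[where b = False]) (use a1 V in simp_all)
  also have "\<dots> \<sim>\<^sub>M (a + 3, B1 @ [(a, s1), (a + 2, False), (a + 1, True)] @ B2 @ [(a, s2), (a + 1, False), (a + 2, True), (a + 1, True)])"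
  proof (rule Mb)
    show "valid_word (a + 3) ((a + 2, False) # B1 @ [(a, s1), (a + 1, True), (a + 2, True)] @ B2 @ [(a, s2), (a + 1, True),
          (a + 2, False)])" using a1 V by simp
    have c1: "braid_eq (a + 3) ([(a + 2, False)] @ (B1 @ [(a, s1)])) ((B1 @ [(a, s1)]) @ [(a + 2, False)])"
      by (rule commute) (use a1 in \<open>auto dest: L1\<close>)
    have c2: "braid_eq (a + 3) ([(a + 2, True)] @ (B2 @ [(a, s2)])) ((B2 @ [(a, s2)]) @ [(a + 2, True)])"
      by (rule commute) (use a1 in \<open>auto dest: L2\<close>)
    have r: "braid_eq (a + 3) [(a + 2, True), (a + 1, True), (a + 2, False)] [(a + 1, False), (a + 2, True), (a + 1, True)]"
      using rel2[of "a + 1" "a + 3"] a1 by (simp add: numeral_eq_Suc)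
    have "braid_eq (a + 3) ([] @ ([(a + 2, False)] @ (B1 @ [(a, s1)])) @ ([(a + 1, True), (a + 2, True)] @ B2 @ [(a, s2), (a + 1, True), (a + 2, False)]))
            ([] @ ((B1 @ [(a, s1)]) @ [(a + 2, False)]) @ ([(a + 1, True), (a + 2, True)] @ B2 @ [(a, s2), (a + 1, True), (a + 2, False)]))"
      by (rule ctx[OF c1])
    also have "braid_eq (a + 3) ([] @ ((B1 @ [(a, s1)]) @ [(a + 2, False)]) @ ([(a + 1, True), (a + 2, True)] @ B2 @ [(a, s2), (a + 1, True), (a + 2, False)]))
          ((B1 @ [(a, s1), (a + 2, False), (a + 1, True)]) @ ([(a + 2, True)] @ (B2 @ [(a, s2)])) @ [(a + 1, True), (a + 2, False)])"
      by (simp add: braid_eq.refl)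
    also have "braid_eq (a + 3) ((B1 @ [(a, s1), (a + 2, False), (a + 1, True)]) @ ([(a + 2, True)] @ (B2 @ [(a, s2)])) @ [(a + 1, True), (a + 2, False)])
          ((B1 @ [(a, s1), (a + 2, False), (a + 1, True)]) @ ((B2 @ [(a, s2)]) @ [(a + 2, True)]) @ [(a + 1, True), (a + 2, False)])"
      by (rule ctx[OF c2])
    also have "braid_eq (a + 3) ((B1 @ [(a, s1), (a + 2, False), (a + 1, True)]) @ ((B2 @ [(a, s2)]) @ [(a + 2, True)]) @ [(a + 1, True), (a + 2, False)])
          ((B1 @ [(a, s1), (a + 2, False), (a + 1, True)] @ B2 @ [(a, s2)]) @ [(a + 2, True), (a + 1, True), (a + 2, False)] @ [])"
      by (simp add: braid_eq.refl)
    also have "braid_eq (a + 3) ((B1 @ [(a, s1), (a + 2, False), (a + 1, True)] @ B2 @ [(a, s2)]) @ [(a + 2, True), (a + 1, True), (a + 2, False)] @ [])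
          ((B1 @ [(a, s1), (a + 2, False), (a + 1, True)] @ B2 @ [(a, s2)]) @ [(a + 1, False), (a + 2, True), (a + 1, True)] @ [])"
      by (rule ctx[OF r])
    finally show "braid_eq (a + 3) ((a + 2, False) # B1 @ [(a, s1), (a + 1, True), (a + 2, True)] @ B2 @ [(a, s2), (a + 1, True),
          (a + 2, False)]) (B1 @ [(a, s1), (a + 2, False), (a + 1, True)] @ B2 @ [(a, s2), (a + 1, False), (a + 2, True), (a + 1, True)])"
      by simp
  qed simp
  also have "\<dots> \<sim>\<^sub>M (a + 3, [(a + 2, True), (a + 1, True)] @ B1 @ [(a, s1), (a + 2, False), (a + 1, True)] @ B2 @ [(a, s2), (a + 1, False)])"
    by (rule Mc[where u = "B1 @ [(a, s1), (a + 2, False), (a + 1, True)] @ B2 @ [(a, s2), (a + 1, False)]" and w = "[(a + 2, True), (a + 1, True)]"]) (use a1 V in simp_all)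
  also have "\<dots> \<sim>\<^sub>M (a + 3, [(a + 1, False), (a + 2, True), (a + 1, True)] @ B1 @ [(a, s1), (a + 1, True)] @ B2 @ [(a, s2), (a + 1, False)])"
  proof (rule Mb)
    show "valid_word (a + 3) ([(a + 2, True), (a + 1, True)] @ B1 @ [(a, s1), (a + 2, False), (a + 1, True)] @ B2 @ [(a, s2), (a + 1, False)])"
      using a1 V by simp
    have c1: "braid_eq (a + 3) ([(a + 2, False)] @ (B1 @ [(a, s1)])) ((B1 @ [(a, s1)]) @ [(a + 2, False)])"
      by (rule commute) (use a1 in \<open>auto dest: L1\<close>)
    have r: "braid_eq (a + 3) [(a + 2, True), (a + 1, True), (a + 2, False)] [(a + 1, False), (a + 2, True), (a + 1, True)]"
      using rel2[of "a + 1" "a + 3"] a1 by (simp add: numeral_eq_Suc)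
    have "braid_eq (a + 3) ([(a + 2, True), (a + 1, True)] @ ((B1 @ [(a, s1)]) @ [(a + 2, False)]) @ ([(a + 1, True)] @ B2 @ [(a, s2), (a + 1, False)]))
        ([(a + 2, True), (a + 1, True)] @ ([(a + 2, False)] @ (B1 @ [(a, s1)])) @ ([(a + 1, True)] @ B2 @ [(a, s2), (a + 1, False)]))"
      by (rule ctx[OF braid_eq.sym[OF c1]])
    also have "braid_eq (a + 3) ([(a + 2, True), (a + 1, True)] @ ([(a + 2, False)] @ (B1 @ [(a, s1)])) @ ([(a + 1, True)] @ B2 @ [(a, s2), (a + 1, False)]))
        ([] @ [(a + 2, True), (a + 1, True), (a + 2, False)] @ (B1 @ [(a, s1), (a + 1, True)] @ B2 @ [(a, s2), (a + 1, False)]))"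
      by (simp add: braid_eq.refl)
    also have "braid_eq (a + 3) ([] @ [(a + 2, True), (a + 1, True), (a + 2, False)] @ (B1 @ [(a, s1), (a + 1, True)] @ B2 @ [(a, s2), (a + 1, False)]))
        ([] @ [(a + 1, False), (a + 2, True), (a + 1, True)] @ (B1 @ [(a, s1), (a + 1, True)] @ B2 @ [(a, s2), (a + 1, False)]))"
      by (rule ctx[OF r])
    finally show "braid_eq (a + 3) ([(a + 2, True), (a + 1, True)] @ B1 @ [(a, s1), (a + 2, False), (a + 1, True)] @ B2 @ [(a, s2), (a + 1, False)])
       ([(a + 1, False), (a + 2, True), (a + 1, True)] @ B1 @ [(a, s1), (a + 1, True)] @ B2 @ [(a, s2), (a + 1, False)])" by simp
  qed simp
  also have "\<dots> \<sim>\<^sub>M (a + 3, [(a + 2, True), (a + 1, True)] @ B1 @ [(a, s1), (a + 1, True)] @ B2 @ [(a, s2), (a + 1, False), (a + 1, False)])"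
    by (rule Mc[where u = "[(a + 1, False)]" and w = "[(a + 2, True), (a + 1, True)] @ B1 @ [(a, s1), (a + 1, True)] @ B2 @ [(a, s2), (a + 1, False)]"]) (use a1 V in simp_all)
  also have "\<dots> \<sim>\<^sub>M (a + 3, (a + 1, True) # B1 @ [(a, s1), (a + 1, True)] @ B2 @ [(a, s2), (a + 1, False), (a + 1, False), (a + 2, True)])"
    by (rule Mc[where u = "[(a + 2, True)]" and w = "(a + 1, True) # B1 @ [(a, s1), (a + 1, True)] @ B2 @ [(a, s2), (a + 1, False), (a + 1, False)]"]) (use a1 V in simp_all)
  also have "\<dots> \<sim>\<^sub>M (a + 2, (a + 1, True) # B1 @ [(a, s1), (a + 1, True)] @ B2 @ [(a, s2), (a + 1, False), (a + 1, False)])"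
    by (rule Md[where b = True]) (use a1 V in simp_all)
  also have "\<dots> \<sim>\<^sub>M (a + 2, [(a + 1, False), (a + 1, False), (a + 1, True)] @ B1 @ [(a, s1), (a + 1, True)] @ B2 @ [(a, s2)])"
    by (rule Mc[where u = "(a + 1, True) # B1 @ [(a, s1), (a + 1, True)] @ B2 @ [(a, s2)]" and w = "[(a + 1, False), (a + 1, False)]"]) (use a1 V in simp_all)
  also have "\<dots> \<sim>\<^sub>M (a + 2, B1 @ [(a, True), (a + 1, s1), (a, False)] @ B2 @ [(a, s2)])"
  proof (rule Mb)
    show "valid_word (a + 2) ([(a + 1, False), (a + 1, False), (a + 1, True)] @ B1 @ [(a, s1), (a + 1, True)] @ B2 @ [(a, s2)])"
      using a1 V by simp
    have c3: "braid_eq (a + 2) ([(a + 1, False)] @ B1) (B1 @ [(a + 1, False)])"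
      by (rule commute) (use a1 in \<open>auto dest: L1\<close>)
    have r: "braid_eq (a + 2) [(a + 1, False), (a, s1), (a + 1, True)] [(a, True), (a + 1, s1), (a, False)]"
      using rel3[of a "a + 2"] rel4[of a "a + 2"] a1 by (cases s1) simp_all
    have "braid_eq (a + 2) ([(a + 1, False)] @ [(a + 1, False), (a + 1, \<not> False)] @ (B1 @ [(a, s1), (a + 1, True)] @ B2 @ [(a, s2)]))
        ([(a + 1, False)] @ (B1 @ [(a, s1), (a + 1, True)] @ B2 @ [(a, s2)]))"
      by (rule braid_eq.free) (use a1 in simp_all)
    also have "braid_eq (a + 2) ([(a + 1, False)] @ (B1 @ [(a, s1), (a + 1, True)] @ B2 @ [(a, s2)]))
        ([] @ ([(a + 1, False)] @ B1) @ ([(a, s1), (a + 1, True)] @ B2 @ [(a, s2)]))"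
      by (simp add: braid_eq.refl)
    also have "braid_eq (a + 2) ([] @ ([(a + 1, False)] @ B1) @ ([(a, s1), (a + 1, True)] @ B2 @ [(a, s2)]))
        ([] @ (B1 @ [(a + 1, False)]) @ ([(a, s1), (a + 1, True)] @ B2 @ [(a, s2)]))"
      by (rule ctx[OF c3])
    also have "braid_eq (a + 2) ([] @ (B1 @ [(a + 1, False)]) @ ([(a, s1), (a + 1, True)] @ B2 @ [(a, s2)]))
        (B1 @ [(a + 1, False), (a, s1), (a + 1, True)] @ (B2 @ [(a, s2)]))"
      by (simp add: braid_eq.refl)
    also have "braid_eq (a + 2) (B1 @ [(a + 1, False), (a, s1), (a + 1, True)] @ (B2 @ [(a, s2)]))
        (B1 @ [(a, True), (a + 1, s1), (a, False)] @ (B2 @ [(a, s2)]))"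
      by (rule ctx[OF r])
    finally show "braid_eq (a + 2) ([(a + 1, False), (a + 1, False), (a + 1, True)] @ B1 @ [(a, s1), (a + 1, True)] @ B2 @ [(a, s2)])
        (B1 @ [(a, True), (a + 1, s1), (a, False)] @ B2 @ [(a, s2)])" by simp
  qed simp
  also have "\<dots> \<sim>\<^sub>M (a + 2, (a, False) # B2 @ [(a, s2)] @ B1 @ [(a, True), (a + 1, s1)])"
    by (rule Mc[where u = "B1 @ [(a, True), (a + 1, s1)]" and w = "(a, False) # B2 @ [(a, s2)]"]) (use a1 V in simp_all)
  also have "\<dots> \<sim>\<^sub>M (a + 1, (a, False) # B2 @ [(a, s2)] @ B1 @ [(a, True)])"
    by (rule Md[where b = s1]) (use a1 V in simp_all)
  also have "\<dots> \<sim>\<^sub>M (a + 1, [(a, True), (a, False)] @ B2 @ [(a, s2)] @ B1)"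
    by (rule Mc[where u = "(a, False) # B2 @ [(a, s2)] @ B1" and w = "[(a, True)]"]) (use a1 V in simp_all)
  also have "\<dots> \<sim>\<^sub>M (a + 1, B2 @ [(a, s2)] @ B1)"
  proof (rule Mb)
    show "valid_word (a + 1) ([(a, True), (a, False)] @ B2 @ [(a, s2)] @ B1)" using a1 V by simp
    show "braid_eq (a + 1) ([(a, True), (a, False)] @ B2 @ [(a, s2)] @ B1) (B2 @ [(a, s2)] @ B1)"
      using braid_eq.free[of a "a + 1" "[]" True "B2 @ [(a, s2)] @ B1"] a1 by simp
  qed simp
  also have "\<dots> \<sim>\<^sub>M (a + 1, B1 @ B2 @ [(a, s2)])"
    by (rule Mc[where u = "B2 @ [(a, s2)]" and w = "B1"]) (use a1 V in simp_all)
  also have "\<dots> \<sim>\<^sub>M (a, B1 @ B2)"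
    by (rule Md[where b = s2]) (use a1 V in simp_all)
  finally show ?thesis .
qed

lemma sig_set: "(i, b) \<in> set (sig k e) \<Longrightarrow> i = k"
  unfolding sig_def by (auto split: if_splits)

lemma beta_set: "(i, b) \<in> set (concat (map (\<lambda>k. sig k (f k)) [1..<a])) \<Longrightarrow> 1 \<le> i \<and> i < a"
  by (auto dest: sig_set)

lemma sig_pm: "e \<in> {1, -1} \<Longrightarrow> sig i e = [(i, e = 1)]"
  unfolding sig_def by auto

theorem lemma3p3:
  fixes p :: nat and g :: "nat \<Rightarrow> nat \<Rightarrow> int"
  assumes "p \<ge> 5"
    and "\<forall>j \<in> {1, 2}. \<forall>k \<in> {1..p - 4}. g j k \<in> {1, -1}"
  shows "let \<beta> = (\<lambda>j. concat (map (\<lambda>k. sig k (g j k)) [1..<p - 4])) in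
    (p, \<beta> 1 @ sig (p - 4) (g 1 (p - 4)) @ sig (p - 3) 1 @ sig (p - 2) 1 @ sig (p - 1) (-1)
        @ \<beta> 2 @ sig (p - 4) (g 2 (p - 4)) @ sig (p - 3) 1 @ sig (p - 2) (-1) @ sig (p - 1) (-1))
    \<sim>\<^sub>M (p - 4, \<beta> 1 @ \<beta> 2)"
proof -
  define a where "a = p - 4"
  have a1: "1 \<le> a" and pa: "p = a + 4" using assms(1) unfolding a_def by auto
  have g1: "g 1 a \<in> {1, -1}" and g2: "g 2 a \<in> {1, -1}" using assms(2) a1 unfolding a_def by auto
  have e: "p - 4 = a" "p - 3 = a + 1" "p - 2 = a + 2" "p - 1 = a + 3" using pa by auto
  have s1: "sig i 1 = [(i, True)]" "sig i (-1) = [(i, False)]" for i unfolding sig_def by auto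
  show ?thesis
    unfolding Let_def e s1 sig_pm[OF g1] sig_pm[OF g2]
    using mainlem[of a "concat (map (\<lambda>k. sig k (g 1 k)) [1..<a])" "concat (map (\<lambda>k. sig k (g 2 k)) [1..<a])"
      "g 1 a = 1" "g 2 a = 1", OF a1 beta_set beta_set] pa by simp
qed

end
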